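(* Let $M=(M_{ij})$ be a reduced $n\times n$ matrix of integers with $M_{ij}>0$ for all $i,j$. If there exist $i\neq j$ with $M_{ii}=1$ and $M_{jj}=1$, then $\mathrm{Cat}(M)=\emptyset$.
   Context: For an $n\times n$ matrix $M=(m_{ij})$ with entries in the natural numbers, $\mathrm{Cat}(M)$ denotes the collection of categories $A$ with exactly $n$ distinct objects $x_1,\dots,x_n$ such that $|A(x_i,x_j)|=m_{ij}$ for all $i,j$, where $A(x_i,x_j)$ is the set of morphisms from $x_i$ to $x_j$. A matrix $M$ is called non-reduced if there exist $i\neq j$ such that $M_{ki}=M_{kj}$ and $M_{ik}=M_{jk}$ for all $k$ (row $i$ equals row $j$ and column $i$ equals column $j$); it is called reduced otherwise. *)

theory Defs
  imports Main
begin

text \<open>Hom i j is the set of morphisms from x_i to x_j, ident i the identity of x_i,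
  cmp i j k g f the composite g o f of f : x_i -> x_j and g : x_j -> x_k.\<close>

definition is_category ::
  "nat \<Rightarrow> (nat \<Rightarrow> nat \<Rightarrow> 'm set) \<Rightarrow> (nat \<Rightarrow> 'm)
     \<Rightarrow> (nat \<Rightarrow> nat \<Rightarrow> nat \<Rightarrow> 'm \<Rightarrow> 'm \<Rightarrow> 'm) \<Rightarrow> bool" where
  "is_category n Hom ident cmp \<longleftrightarrow>
     (\<forall>i<n. ident i \<in> Hom i i) \<and>
     (\<forall>i<n. \<forall>j<n. \<forall>k<n. \<forall>f\<in>Hom i j. \<forall>g\<in>Hom j k. cmp i j k g f \<in> Hom i k) \<and>
     (\<forall>i<n. \<forall>j<n. \<forall>f\<in>Hom i j. cmp i j j (ident j) f = f \<and> cmp i i j f (ident i) = f) \<and>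
     (\<forall>i<n. \<forall>j<n. \<forall>k<n. \<forall>l<n. \<forall>f\<in>Hom i j. \<forall>g\<in>Hom j k. \<forall>h\<in>Hom k l.
        cmp i k l h (cmp i j k g f) = cmp i j l (cmp j k l h g) f)"

definition Cat ::
  "nat \<Rightarrow> (nat \<Rightarrow> nat \<Rightarrow> nat) \<Rightarrow>
     ((nat \<Rightarrow> nat \<Rightarrow> 'm set) \<times> (nat \<Rightarrow> 'm) \<times> (nat \<Rightarrow> nat \<Rightarrow> nat \<Rightarrow> 'm \<Rightarrow> 'm \<Rightarrow> 'm)) set" where
  "Cat n M = {(Hom, ident, cmp). is_category n Hom ident cmp \<and>
       (\<forall>i<n. \<forall>j<n. finite (Hom i j) \<and> card (Hom i j) = M i j)}"

definition non_reduced :: "nat \<Rightarrow> (nat \<Rightarrow> nat \<Rightarrow> nat) \<Rightarrow> bool" where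
  "non_reduced n M \<longleftrightarrow> (\<exists>i<n. \<exists>j<n. i \<noteq> j \<and> (\<forall>k<n. M k i = M k j \<and> M i k = M j k))"

definition reduced :: "nat \<Rightarrow> (nat \<Rightarrow> nat \<Rightarrow> nat) \<Rightarrow> bool" where
  "reduced n M \<longleftrightarrow> \<not> non_reduced n M"

end

theory Submission
  imports Defs
begin

theorem mainTheorem8:
  fixes n :: nat and M :: "nat \<Rightarrow> nat \<Rightarrow> nat" and i j :: nat
  assumes "reduced n M"
    and "\<forall>a<n. \<forall>b<n. M a b > 0"
    and "i < n" and "j < n" and "i \<noteq> j"
    and "M i i = 1" and "M j j = 1"
  shows "(Cat n M :: ((nat \<Rightarrow> nat \<Rightarrow> 'm set) \<times> (nat \<Rightarrow> 'm) \<times> (nat \<Rightarrow> nat \<Rightarrow> nat \<Rightarrow> 'm \<Rightarrow> 'm \<Rightarrow> 'm)) set) = {}"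
proof (rule ccontr)
  assume "(Cat n M :: ((nat \<Rightarrow> nat \<Rightarrow> 'm set) \<times> (nat \<Rightarrow> 'm) \<times> (nat \<Rightarrow> nat \<Rightarrow> nat \<Rightarrow> 'm \<Rightarrow> 'm \<Rightarrow> 'm)) set) \<noteq> {}"
  then obtain Hom and ident :: "nat \<Rightarrow> 'm" and cmp where
    C: "is_category n Hom ident cmp" and card: "\<forall>a<n. \<forall>b<n. finite (Hom a b) \<and> card (Hom a b) = M a b"
    unfolding Cat_def by auto
  note id = C[unfolded is_category_def, THEN conjunct1]
  note cl = C[unfolded is_category_def, THEN conjunct2, THEN conjunct1]
  note un = C[unfolded is_category_def, THEN conjunct2, THEN conjunct2, THEN conjunct1]
  note as = C[unfolded is_category_def, THEN conjunct2, THEN conjunct2, THEN conjunct2]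
  have ne: "Hom a b \<noteq> {}" if "a < n" "b < n" for a b
    using card assms(2) that by (metis card.empty less_irrefl)
  obtain f where f: "f \<in> Hom i j" using ne assms by blast
  obtain g where g: "g \<in> Hom j i" using ne assms by blast
  have single: "x = ident a" if "x \<in> Hom a a" "a < n" "M a a = 1" for x a
  proof -
    have "card (Hom a a) = 1" using card that by auto
    then obtain y where "Hom a a = {y}" by (meson card_1_singletonE)
    thus ?thesis using id that by auto
  qed
  have gf: "cmp i j i g f = ident i" using single cl f g assms by blast
  have fg: "cmp j i j f g = ident j" using single cl f g assms by blast
  have "\<forall>k<n. M k i = M k j \<and> M i k = M j k"
  proof (intro allI impI conjI)
    fix k assume k: "k < n"
    have "bij_betw (\<lambda>h. cmp k i j f h) (Hom k i) (Hom k j)"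
    proof (rule bij_betw_byWitness[where f'="\<lambda>h. cmp k j i g h"])
      show "\<forall>h\<in>Hom k i. cmp k j i g (cmp k i j f h) = h"
      proof
        fix h assume h: "h \<in> Hom k i"
        have "cmp k j i g (cmp k i j f h) = cmp k i i (cmp i j i g f) h"
          using as k assms f g h by blast
        also have "\<dots> = h" using gf un k assms h by simp
        finally show "cmp k j i g (cmp k i j f h) = h" .
      qed
      show "\<forall>h\<in>Hom k j. cmp k i j f (cmp k j i g h) = h"
      proof
        fix h assume h: "h \<in> Hom k j"
        have "cmp k i j f (cmp k j i g h) = cmp k j j (cmp j i j f g) h"
          using as k assms f g h by blast
        also have "\<dots> = h" using fg un k assms h by simp
        finally show "cmp k i j f (cmp k j i g h) = h" .
      qed
      show "(\<lambda>h. cmp k i j f h) ` Hom k i \<subseteq> Hom k j" using cl k assms f by blast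
      show "(\<lambda>h. cmp k j i g h) ` Hom k j \<subseteq> Hom k i" using cl k assms g by blast
    qed
    thus "M k i = M k j" using bij_betw_same_card card k assms by metis
    have "bij_betw (\<lambda>h. cmp j i k h g) (Hom i k) (Hom j k)"
    proof (rule bij_betw_byWitness[where f'="\<lambda>h. cmp i j k h f"])
      show "\<forall>h\<in>Hom i k. cmp i j k (cmp j i k h g) f = h"
      proof
        fix h assume h: "h \<in> Hom i k"
        have "cmp i j k (cmp j i k h g) f = cmp i i k h (cmp i j i g f)"
          using as k assms f g h by metis
        also have "\<dots> = h" using gf un k assms h by simp
        finally show "cmp i j k (cmp j i k h g) f = h" .
      qed
      show "\<forall>h\<in>Hom j k. cmp j i k (cmp i j k h f) g = h"
      proof
        fix h assume h: "h \<in> Hom j k"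
        have "cmp j i k (cmp i j k h f) g = cmp j j k h (cmp j i j f g)"
          using as k assms f g h by metis
        also have "\<dots> = h" using fg un k assms h by simp
        finally show "cmp j i k (cmp i j k h f) g = h" .
      qed
      show "(\<lambda>h. cmp j i k h g) ` Hom i k \<subseteq> Hom j k" using cl k assms g by blast
      show "(\<lambda>h. cmp i j k h f) ` Hom j k \<subseteq> Hom i k" using cl k assms f by blast
    qed
    thus "M i k = M j k" using bij_betw_same_card card k assms by metis
  qed
  thus False using assms(1,3,4,5) unfolding reduced_def non_reduced_def by blast
qed

end
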